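(* Let $(X_m)_{m\in\mathbb Z}$ be a homogeneous second order recurrence sequence with constant coefficients. For integers $a,b,c,d,e$ put $$\Delta=X_{d-a}X_{e-b}-X_{e-a}X_{d-b},\quad \Delta_1=X_{d-c}X_{e-b}-X_{e-c}X_{d-b},\quad \Delta_2=X_{d-a}X_{e-c}-X_{e-a}X_{d-c},$$ and suppose $\Delta_1\neq0$ and $\Delta_2\neq0$. Then for every nonnegative integer $k$ and every integer $m$: $$\sum_{r=0}^k\binom kr\left(\frac{\Delta_1}{\Delta_2}\right)^rX_{m-(b-c)k+(b-a)r}=\left(\frac{\Delta}{\Delta_2}\right)^kX_m,$$ $$\sum_{r=0}^k\binom kr\left(\frac{-\Delta}{\Delta_2}\right)^rX_{m+(a-b)k+(b-c)r}=\left(\frac{\Delta_1}{-\Delta_2}\right)^kX_m,$$ $$\sum_{r=0}^k\binom kr\left(\frac{-\Delta}{\Delta_1}\right)^rX_{m+(b-a)k+(a-c)r}=\left(\frac{\Delta_2}{-\Delta_1}\right)^kX_m.$$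
   Context: A homogeneous second order recurrence sequence with constant coefficients is a sequence $(X_m)_{m\in\mathbb Z}$ of complex numbers for which there are constants $p,q\in\mathbb C$, $q\neq 0$, with $X_m=pX_{m-1}+qX_{m-2}$ for all $m\in\mathbb Z$. Here $0^0=1$. *)

theory Defs
  imports Complex_Main
begin

definition hom_second_order_rec :: "(int \<Rightarrow> complex) \<Rightarrow> bool" where
  "hom_second_order_rec X \<longleftrightarrow>
     (\<exists>p q :: complex. q \<noteq> 0 \<and> (\<forall>m::int. X m = p * X (m - 1) + q * X (m - 2)))"

end

theory Submission
  imports Defs
begin

lemma pascal_sum:
  fixes g :: "nat \<Rightarrow> complex"
  shows "(\<Sum>r\<le>Suc k. of_nat (Suc k choose r) * g r)
       = (\<Sum>r\<le>k. of_nat (k choose r) * g r) + (\<Sum>r\<le>k. of_nat (k choose r) * g (Suc r))"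
proof -
  have A: "(\<Sum>r\<le>Suc k. of_nat (Suc k choose r) * g r)
     = g 0 + (\<Sum>r\<le>k. of_nat (k choose r) * g (Suc r)) + (\<Sum>r\<le>k. of_nat (k choose Suc r) * g (Suc r))"
    by (simp add: sum.atMost_Suc_shift del: sum.atMost_Suc binomial_Suc_Suc)
       (simp add: binomial_Suc_Suc distrib_right sum.distrib)
  have B: "(\<Sum>r\<le>Suc k. of_nat (k choose r) * g r) = (\<Sum>r\<le>k. of_nat (k choose r) * g r)"
    by simp
  have C: "(\<Sum>r\<le>Suc k. of_nat (k choose r) * g r) = g 0 + (\<Sum>r\<le>k. of_nat (k choose Suc r) * g (Suc r))"
    by (simp add: sum.atMost_Suc_shift del: sum.atMost_Suc)
  have D: "(\<Sum>r\<le>k. of_nat (k choose r) * g r) = g 0 + (\<Sum>r\<le>k. of_nat (k choose Suc r) * g (Suc r))"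
    using B C by (simp add: binomial_eq_0)
  show ?thesis unfolding A D by (simp add: algebra_simps)
qed

lemma binom_iter:
  fixes X :: "int \<Rightarrow> complex"
  assumes h: "\<And>n. l * X (n + s) = X n + t * X (n + u)"
  shows "l^k * X (n + s * int k) = (\<Sum>r\<le>k. of_nat (k choose r) * t^r * X (n + u * int r))"
proof (induction k arbitrary: n)
  case 0
  then show ?case by simp
next
  case (Suc k)
  have "l^(Suc k) * X (n + s * int (Suc k)) = l^k * (l * X ((n + s * int k) + s))"
    by (simp add: algebra_simps)
  also have "\<dots> = l^k * (X (n + s * int k) + t * X ((n + s * int k) + u))"
    by (simp only: h)
  also have "\<dots> = l^k * X (n + s * int k) + t * (l^k * X ((n + u) + s * int k))"
    by (simp add: algebra_simps)
  also have "\<dots> = (\<Sum>r\<le>k. of_nat (k choose r) * (t^r * X (n + u * int r)))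
      + (\<Sum>r\<le>k. of_nat (k choose r) * (t^(Suc r) * X (n + u * int (Suc r))))"
    unfolding Suc.IH sum_distrib_left
    by (simp add: algebra_simps)
  also have "\<dots> = (\<Sum>r\<le>Suc k. of_nat (Suc k choose r) * (t^r * X (n + u * int r)))"
    using pascal_sum[of k "\<lambda>r. t^r * X (n + u * int r)"] by simp
  finally show ?case by (simp add: mult.assoc)
qed

definition sol :: "complex \<Rightarrow> complex \<Rightarrow> (int \<Rightarrow> complex) \<Rightarrow> bool" where
  "sol p q Y \<longleftrightarrow> (\<forall>m. Y m = p * Y (m - 1) + q * Y (m - 2))"

context
  fixes p q :: complex
  assumes q: "q \<noteq> 0"
begin

lemma sol_zero:
  assumes "sol p q Y" "Y 0 = 0" "Y 1 = 0"
  shows "Y n = 0"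
proof -
  have r: "\<And>m. Y m = p * Y (m - 1) + q * Y (m - 2)" using assms(1) unfolding sol_def by blast
  have f: "Y (int k) = 0 \<and> Y (int k + 1) = 0" for k
  proof (induction k)
    case 0 then show ?case using assms by simp
  next
    case (Suc k)
    have e: "int k + 2 - 1 = int k + 1" "int k + 2 - 2 = int k" by simp_all
    have "Y (int k + 2) = p * Y (int k + 1) + q * Y (int k)" using r[of "int k + 2"] by (simp only: e)
    then have "Y (int k + 2) = 0" using Suc by (simp only: mult_zero_right add_0_left)
    moreover have "int (Suc k) = int k + 1" "int (Suc k) + 1 = int k + 2" by simp_all
    ultimately show ?case using Suc by (simp add: ac_simps)
  qed
  have b: "Y (- int k) = 0 \<and> Y (1 - int k) = 0" for k
  proof (induction k)
    case 0 then show ?case using assms by simp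
  next
    case (Suc k)
    have e: "1 - int k - 1 = - int k" "1 - int k - 2 = - int k - 1" by simp_all
    have "Y (1 - int k) = p * Y (- int k) + q * Y (- int k - 1)" using r[of "1 - int k"] by (simp only: e)
    then have "q * Y (- int k - 1) = 0" using Suc by (simp only: mult_zero_right add_0_left)
    then have "Y (- int k - 1) = 0" using q by simp
    moreover have "- int (Suc k) = - int k - 1" "1 - int (Suc k) = - int k" by simp_all
    ultimately show ?case using Suc by (simp only:)
  qed
  show ?thesis
  proof (cases "n \<ge> 0")
    case True then show ?thesis using f[of "nat n"] by simp
  next
    case False then show ?thesis using b[of "nat (-n)"] by simp
  qed
qed

lemma sol_lin: "sol p q U \<Longrightarrow> sol p q W \<Longrightarrow> sol p q (\<lambda>n. Y n - \<alpha> * U n - \<beta> * W n) \<longleftrightarrow> sol p q Y"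
  unfolding sol_def
proof -
  assume U: "\<forall>m. U m = p * U (m - 1) + q * U (m - 2)" and W: "\<forall>m. W m = p * W (m - 1) + q * W (m - 2)"
  show "(\<forall>m. Y m - \<alpha> * U m - \<beta> * W m = p * (Y (m - 1) - \<alpha> * U (m - 1) - \<beta> * W (m - 1)) +
          q * (Y (m - 2) - \<alpha> * U (m - 2) - \<beta> * W (m - 2))) =
    (\<forall>m. Y m = p * Y (m - 1) + q * Y (m - 2))"
  proof (intro iffI allI)
    fix m assume H: "\<forall>m. Y m - \<alpha> * U m - \<beta> * W m = p * (Y (m - 1) - \<alpha> * U (m - 1) - \<beta> * W (m - 1)) +
          q * (Y (m - 2) - \<alpha> * U (m - 2) - \<beta> * W (m - 2))"
    show "Y m = p * Y (m - 1) + q * Y (m - 2)"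
      using H[rule_format, of m] U[rule_format, of m] W[rule_format, of m]
      by (simp add: algebra_simps)
  next
    fix m assume H: "\<forall>m. Y m = p * Y (m - 1) + q * Y (m - 2)"
    show "Y m - \<alpha> * U m - \<beta> * W m = p * (Y (m - 1) - \<alpha> * U (m - 1) - \<beta> * W (m - 1)) +
          q * (Y (m - 2) - \<alpha> * U (m - 2) - \<beta> * W (m - 2))"
      using H[rule_format, of m] U[rule_format, of m] W[rule_format, of m]
      by (simp add: algebra_simps)
  qed
qed

lemma casor:
  assumes U: "sol p q U" and W: "sol p q W" and G: "U d * W e - U e * W d \<noteq> 0"
  shows "U 0 * W 1 - U 1 * W 0 \<noteq> 0"
proof
  assume C: "U 0 * W 1 - U 1 * W 0 = 0"
  obtain c0 where l: "U 0 = c0 * W 0" "U 1 = c0 * W 1"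
  proof (cases "W 0 = 0")
    case True
    show ?thesis
    proof (cases "W 1 = 0")
      case True2: True
      have "W n = 0" for n
        using sol_zero[of W n] W True True2 by simp
      then show ?thesis using G by simp
    next
      case False
      then have "U 0 = 0" using C True by simp
      then show ?thesis using that[of "U 1 / W 1"] True False by simp
    qed
  next
    case False
    then have "U 1 = U 0 / W 0 * W 1" using C by (simp add: field_simps)
    then show ?thesis using that[of "U 0 / W 0"] False by simp
  qed
  have "sol p q (\<lambda>n. U n - c0 * W n - 0 * W n)" using sol_lin[OF W W] U by blast
  then have "U n - c0 * W n = 0" for n using sol_zero[of "\<lambda>n. U n - c0 * W n - 0 * W n" n] l by simp
  then have "U n = c0 * W n" for n by simp
  then show False using G by (simp add: algebra_simps)
qed

lemma basis:
  assumes U: "sol p q U" and W: "sol p q W" and Y: "sol p q Y" and G: "U d * W e - U e * W d \<noteq> 0"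
  shows "Y n = (Y d * W e - Y e * W d) / (U d * W e - U e * W d) * U n
             + (U d * Y e - U e * Y d) / (U d * W e - U e * W d) * W n"
proof -
  define g where "g = U d * W e - U e * W d"
  have gnz: "g \<noteq> 0" using G g_def by simp
  define \<alpha> where "\<alpha> = (Y d * W e - Y e * W d) / g"
  define \<beta> where "\<beta> = (U d * Y e - U e * Y d) / g"
  define Z where "Z = (\<lambda>n. Y n - \<alpha> * U n - \<beta> * W n)"
  have SZ: "sol p q Z" unfolding Z_def using sol_lin[OF U W] Y by blast
  have Zd1: "Z d = 0" unfolding Z_def \<alpha>_def \<beta>_def using gnz
    by (simp add: field_simps) (simp add: g_def algebra_simps)
  have Zd2: "Z e = 0" unfolding Z_def \<alpha>_def \<beta>_def using gnz
    by (simp add: field_simps) (simp add: g_def algebra_simps)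
  note Zd = Zd1 Zd2
  define c where "c = U 0 * W 1 - U 1 * W 0"
  have C0: "c \<noteq> 0" using casor[OF U W G] c_def by simp
  define \<alpha>' where "\<alpha>' = (Z 0 * W 1 - Z 1 * W 0) / c"
  define \<beta>' where "\<beta>' = (U 0 * Z 1 - U 1 * Z 0) / c"
  have S': "sol p q (\<lambda>n. Z n - \<alpha>' * U n - \<beta>' * W n)" using sol_lin[OF U W] SZ by blast
  have "Z m - \<alpha>' * U m - \<beta>' * W m = 0" for m
  proof (rule sol_zero[OF S'])
    show "Z 0 - \<alpha>' * U 0 - \<beta>' * W 0 = 0" unfolding \<alpha>'_def \<beta>'_def using C0
      by (simp add: field_simps) (simp add: c_def algebra_simps)
    show "Z 1 - \<alpha>' * U 1 - \<beta>' * W 1 = 0" unfolding \<alpha>'_def \<beta>'_def using C0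
      by (simp add: field_simps) (simp add: c_def algebra_simps)
  qed
  then have Zm: "Z m = \<alpha>' * U m + \<beta>' * W m" for m
    by (simp add: algebra_simps)
  have e1: "\<alpha>' * U d + \<beta>' * W d = 0" "\<alpha>' * U e + \<beta>' * W e = 0" using Zm[of d] Zm[of e] Zd by simp_all
  have "\<alpha>' * (U d * W e - U e * W d) = (\<alpha>' * U d + \<beta>' * W d) * W e - (\<alpha>' * U e + \<beta>' * W e) * W d"
    by (simp add: algebra_simps)
  then have a0: "\<alpha>' = 0" using e1 G by simp
  have "\<beta>' * (U d * W e - U e * W d) = (\<alpha>' * U e + \<beta>' * W e) * U d - (\<alpha>' * U d + \<beta>' * W d) * U e"
    by (simp add: algebra_simps)
  then have b0: "\<beta>' = 0" using e1 G by simp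
  have "Z n = 0" using Zm[of n] a0 b0 by simp
  then have "Y n = \<alpha> * U n + \<beta> * W n" unfolding Z_def by (simp add: algebra_simps)
  then show ?thesis unfolding \<alpha>_def \<beta>_def g_def .
qed

end

theorem lemma6:
  fixes X :: "int \<Rightarrow> complex" and a b c d e :: int
  assumes rec: "hom_second_order_rec X"
  defines "\<Delta> \<equiv> X (d - a) * X (e - b) - X (e - a) * X (d - b)"
  defines "\<Delta>\<^sub>1 \<equiv> X (d - c) * X (e - b) - X (e - c) * X (d - b)"
  defines "\<Delta>\<^sub>2 \<equiv> X (d - a) * X (e - c) - X (e - a) * X (d - c)"
  assumes h1: "\<Delta>\<^sub>1 \<noteq> 0" and h2: "\<Delta>\<^sub>2 \<noteq> 0"
  shows "\<forall>(k::nat) (m::int).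
     (\<Sum>r=0..k. of_nat (k choose r) * (\<Delta>\<^sub>1 / \<Delta>\<^sub>2) ^ r
          * X (m - (b - c) * int k + (b - a) * int r)) = (\<Delta> / \<Delta>\<^sub>2) ^ k * X m
   \<and> (\<Sum>r=0..k. of_nat (k choose r) * (- \<Delta> / \<Delta>\<^sub>2) ^ r
          * X (m + (a - b) * int k + (b - c) * int r)) = (\<Delta>\<^sub>1 / - \<Delta>\<^sub>2) ^ k * X m
   \<and> (\<Sum>r=0..k. of_nat (k choose r) * (- \<Delta> / \<Delta>\<^sub>1) ^ r
          * X (m + (b - a) * int k + (a - c) * int r)) = (\<Delta>\<^sub>2 / - \<Delta>\<^sub>1) ^ k * X m"
proof -
  obtain p q where q: "q \<noteq> 0" and r: "\<And>m. X m = p * X (m - 1) + q * X (m - 2)"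
    using rec unfolding hom_second_order_rec_def by blast
  have S: "sol p q (\<lambda>n. X (n - z))" for z
  proof -
    have "X (m - z) = p * X (m - 1 - z) + q * X (m - 2 - z)" for m
      using r[of "m - z"] by (simp add: algebra_simps)
    then show ?thesis unfolding sol_def by blast
  qed
  have G: "X (d - c) * X (e - b) - X (e - c) * X (d - b) \<noteq> 0" using h1 \<Delta>\<^sub>1_def by simp
  have F0: "X (n - a) = \<Delta> / \<Delta>\<^sub>1 * X (n - c) + (- \<Delta>\<^sub>2) / \<Delta>\<^sub>1 * X (n - b)" for n
    using basis[OF q S[of c] S[of b] S[of a] G, of n]
    unfolding \<Delta>_def \<Delta>\<^sub>1_def \<Delta>\<^sub>2_def by (simp add: algebra_simps)
  have F: "\<Delta>\<^sub>1 * X (n - a) = \<Delta> * X (n - c) - \<Delta>\<^sub>2 * X (n - b)" for n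
    using F0[of n] h1 by (simp add: field_simps)
  have H1: "\<Delta> / \<Delta>\<^sub>2 * X (n + (b - c)) = X n + \<Delta>\<^sub>1 / \<Delta>\<^sub>2 * X (n + (b - a))" for n
    using F[of "n + b"] h2 by (simp add: field_simps)
  have H2: "\<Delta>\<^sub>1 / - \<Delta>\<^sub>2 * X (n + (b - a)) = X n + - \<Delta> / \<Delta>\<^sub>2 * X (n + (b - c))" for n
    using F[of "n + b"] h2 by (simp add: field_simps)
  have H3: "\<Delta>\<^sub>2 / - \<Delta>\<^sub>1 * X (n + (a - b)) = X n + - \<Delta> / \<Delta>\<^sub>1 * X (n + (a - c))" for n
    using F[of "n + a"] h1 by (simp add: field_simps)
  show ?thesis
  proof (intro allI conjI)
    fix k :: nat and m :: int
    show "(\<Sum>r=0..k. of_nat (k choose r) * (\<Delta>\<^sub>1 / \<Delta>\<^sub>2) ^ r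
          * X (m - (b - c) * int k + (b - a) * int r)) = (\<Delta> / \<Delta>\<^sub>2) ^ k * X m"
      using binom_iter[OF H1, of k "m - (b - c) * int k"] by (simp only: atLeast0AtMost diff_add_cancel)
    show "(\<Sum>r=0..k. of_nat (k choose r) * (- \<Delta> / \<Delta>\<^sub>2) ^ r
          * X (m + (a - b) * int k + (b - c) * int r)) = (\<Delta>\<^sub>1 / - \<Delta>\<^sub>2) ^ k * X m"
    proof -
      have e: "m + (a - b) * int k + (b - a) * int k = m" by (simp add: algebra_simps)
      show ?thesis using binom_iter[OF H2, of k "m + (a - b) * int k"] by (simp only: atLeast0AtMost e)
    qed
    show "(\<Sum>r=0..k. of_nat (k choose r) * (- \<Delta> / \<Delta>\<^sub>1) ^ r
          * X (m + (b - a) * int k + (a - c) * int r)) = (\<Delta>\<^sub>2 / - \<Delta>\<^sub>1) ^ k * X m"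
    proof -
      have e: "m + (b - a) * int k + (a - b) * int k = m" by (simp add: algebra_simps)
      show ?thesis using binom_iter[OF H3, of k "m + (b - a) * int k"] by (simp only: atLeast0AtMost e)
    qed
  qed
qed

end
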